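(* Let $\Lambda,\alpha$ be positive integers with $\alpha\in[\Lambda-1]$ and let $r\in[\Lambda-\alpha]$. For the MADC model with combinatorial topology (CT) having $\Lambda$ mapper nodes, $K=\binom{\Lambda}{\alpha}$ reducer nodes and computation load $r$, the communication load $$L(r,\alpha)=\frac{\binom{\Lambda-\alpha}{r}}{\binom{\Lambda}{r}\left(\binom{r+\alpha}{r}-1\right)}$$ is achievable. (The array $D_{\Lambda,r,\alpha}$, whose rows are the batches $B_T$ and columns the reducer nodes $U$, with $d_{T,U}=*$ exactly when reducer $U$ has access to $B_T$, is a $\binom{r+\alpha}{r}$-regular $\left(\binom{\Lambda}{\alpha},\binom{\Lambda}{r},\binom{\Lambda}{\alpha+r}\right)$ MRA representing this model.)
   Context: Notation: $[0,n)=\{0,1,\dots,n-1\}$, $[n]=\{1,\dots,n\}$. MADC (multi-access distributed computing) model: There are $\Lambda$ mapper nodes indexed by $[0,\Lambda)$ and $K$ reducer nodes. There are $N$ input files $w_0,\dots,w_{N-1}\in\mathbb{F}_{2^d}$ and $Q$ output functions $\phi_q:\mathbb{F}_{2^d}^N\to\mathbb{F}_{2^b}$, $q\in[0,Q)$, of the form $\phi_q(w_0,\dots,w_{N-1})=h_q(v_{q,0},\dots,v_{q,N-1})$, where $v_{q,n}=g_{q,n}(w_n)\in\mathbb{F}_{2^t}$ is called an intermediate value (IV). Each reducer node $k$ is assigned a set $\mathcal W_k\subseteq[0,Q)$ of $Q/K$ output functions, these sets being pairwise disjoint. The files are partitioned into $F$ disjoint batches of $N/F$ files each. Map phase: each mapper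 node $\lambda$ stores a set $M_\lambda$ of batches and computes all IVs $v_{q,n}$, $q\in[0,Q)$, for all files $w_n$ in its stored batches. Each reducer node is connected to a set of mapper nodes and has access to every batch stored at any mapper node it is connected to, together with all IVs computed from those batches. Shuffle phase: each reducer node $k$ broadcasts to all other reducer nodes, error-free, a message $\mathbf X_k$ of $l_k$ bits that is a function of the IVs it has access to. Reduce phase: each reducer node $k$ must recover all IVs $v_{q,n}$ with $q\in\mathcal W_k$, $n\in[0,N)$, from the received messages and the IVs it has access to. The computation load is $r=\sum_{\lambda}|M_\lambda|/F$ and the communication load is $L=\sum_{k}l_k/(QNt)$. A communication load $L$ is achievable for a given model if there exists a shuffle/reduce scheme satisfying all decoding requirements that attains $L$ (for a suitable choice of the number of files per batch, the number of functions per reducer, and the IV length $t$). Combinatorial topology (CT): the files are split into $F=\binom{\Lambda}{r}$ batches $B_T$, one for each $T\subset[0,\Lambda)$ with $|T|=r$; mapper node $\lambda$ stores exactly the batches $B_T$ with $\lambda\in T$; there are $K=\binom{\Lambda}{\alpha}$ reducer nodes, one for each $\alpha$-subset $U\subset[0,\Lambda)$, and reducer node $U$ is connected exactly to the mapper nodes in $U$ (so it has access to $B_T$ iff $T\cap U\neq\emptyset$). $D_{\Lambda,r,\alpha}$: order the $(\alpha+r)$-subsets of $[0,\Lambda)$ lexicographically and let $y_{\alpha+r}(T')$ be the position of $T'$ minus 1; $D_{\Lambda,r,\alpha}$ has rows indexed by $r$-subsets $T$ and columns by $\alpha$-subsets $U$ of $[0,\Lambda)$, with $d_{T,U}=*$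 if $T\cap U\ne\emptyset$ and $d_{T,U}=y_{\alpha+r}(T\cup U)$ otherwise. A $g$-regular $(K,F,S)$ MRA is an $F\times K$ array with entries $*$ or integers in $[0,S)$, each integer occurring exactly $g\ge2$ times, such that two equal integer entries lie in distinct rows $f_1,f_2$ and distinct columns $k_1,k_2$ with $p_{f_1,k_2}=p_{f_2,k_1}=*$. *)

theory Defs
  imports Complex_Main
begin

text \<open>Batches are indexed by the r-subsets T of [0,Lambda); reducer nodes by the
alpha-subsets U of [0,Lambda). Reducer U has access to batch T iff T and U intersect.\<close>

definition ct_batches :: "nat \<Rightarrow> nat \<Rightarrow> nat set set" where
  "ct_batches Lam r = {T. T \<subseteq> {..<Lam} \<and> card T = r}"

definition ct_reducers :: "nat \<Rightarrow> nat \<Rightarrow> nat set set" where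
  "ct_reducers Lam a = {U. U \<subseteq> {..<Lam} \<and> card U = a}"

text \<open>An IV index is ((U,i),(T,j)): the i-th output function assigned to reducer U
(i < p, so Q = K*p) evaluated on the j-th file of batch B_T (j < m, so N = F*m).
An IV value in F_(2^t) is represented by its t bits: an assignment
v :: iv_idx => nat => bool, where only bits b < t are meaningful.\<close>

type_synonym iv_idx = "(nat set \<times> nat) \<times> (nat set \<times> nat)"
type_synonym iv_assign = "iv_idx \<Rightarrow> nat \<Rightarrow> bool"

definition iv_valid :: "nat \<Rightarrow> nat \<Rightarrow> nat \<Rightarrow> nat \<Rightarrow> nat \<Rightarrow> iv_idx \<Rightarrow> bool" where
  "iv_valid Lam r a p m x =
     (case x of ((U', i), (T, j)) \<Rightarrow>
        U' \<in> ct_reducers Lam a \<and> i < p \<and> T \<in> ct_batches Lam r \<and> j < m)"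

definition iv_accessible :: "nat \<Rightarrow> nat \<Rightarrow> nat \<Rightarrow> nat \<Rightarrow> nat \<Rightarrow> nat set \<Rightarrow> iv_idx \<Rightarrow> bool" where
  "iv_accessible Lam r a p m U x =
     (iv_valid Lam r a p m x \<and> fst (snd x) \<inter> U \<noteq> {})"

definition iv_required :: "nat \<Rightarrow> nat \<Rightarrow> nat \<Rightarrow> nat \<Rightarrow> nat \<Rightarrow> nat set \<Rightarrow> iv_idx \<Rightarrow> bool" where
  "iv_required Lam r a p m U x =
     (iv_valid Lam r a p m x \<and> fst (fst x) = U)"

definition iv_view :: "nat \<Rightarrow> nat \<Rightarrow> nat \<Rightarrow> nat \<Rightarrow> nat \<Rightarrow> nat \<Rightarrow> nat set \<Rightarrow> iv_assign \<Rightarrow> iv_assign" where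
  "iv_view Lam r a p m t U v =
     (\<lambda>x b. if iv_accessible Lam r a p m U x \<and> b < t then v x b else False)"

definition madc_ct_achievable :: "nat \<Rightarrow> nat \<Rightarrow> nat \<Rightarrow> real \<Rightarrow> bool" where
  "madc_ct_achievable Lam r a L =
     (\<exists>(p::nat) (m::nat) (t::nat) (l :: nat set \<Rightarrow> nat)
        (enc :: nat set \<Rightarrow> iv_assign \<Rightarrow> bool list)
        (dec :: nat set \<Rightarrow> (nat set \<Rightarrow> bool list) \<Rightarrow> iv_assign \<Rightarrow> iv_assign).
        p > 0 \<and> m > 0 \<and> t > 0 \<and>
        (\<forall>U \<in> ct_reducers Lam a. \<forall>v.
            length (enc U (iv_view Lam r a p m t U v)) = l U) \<and>
        (\<forall>U \<in> ct_reducers Lam a. \<forall>v. \<forall>x b.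
            iv_required Lam r a p m U x \<and> b < t \<longrightarrow>
            dec U (\<lambda>U'. if U' \<in> ct_reducers Lam a \<and> U' \<noteq> U
                         then enc U' (iv_view Lam r a p m t U' v) else [])
                  (iv_view Lam r a p m t U v) x b = v x b) \<and>
        L = real (\<Sum>U \<in> ct_reducers Lam a. l U) /
            (real (card (ct_reducers Lam a) * p) * real (card (ct_batches Lam r) * m) * real t))"

text \<open>An array with rows indexed by R and columns by C; entries None = *, Some s = integer s.
g-regular (K,F,S) MRA: F rows, K columns, entries in {*} \<union> [0,S), each integer in [0,S)
occurs exactly g \<ge> 2 times, and equal integer entries at distinct positions lie in
distinct rows f1,f2 and distinct columns k1,k2 with p(f1,k2) = p(f2,k1) = *.\<close>

definition is_regular_MRA ::
  "nat \<Rightarrow> nat \<Rightarrow> nat \<Rightarrow> nat \<Rightarrow> 'r set \<Rightarrow> 'c set \<Rightarrow> ('r \<Rightarrow> 'c \<Rightarrow> nat option) \<Rightarrow> bool" where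
  "is_regular_MRA g K F S R C P =
     (finite R \<and> finite C \<and> card R = F \<and> card C = K \<and> g \<ge> 2 \<and>
      (\<forall>f\<in>R. \<forall>k\<in>C. \<forall>s. P f k = Some s \<longrightarrow> s < S) \<and>
      (\<forall>s<S. card {(f, k). f \<in> R \<and> k \<in> C \<and> P f k = Some s} = g) \<and>
      (\<forall>f1\<in>R. \<forall>f2\<in>R. \<forall>k1\<in>C. \<forall>k2\<in>C. \<forall>s.
          P f1 k1 = Some s \<and> P f2 k2 = Some s \<and> (f1, k1) \<noteq> (f2, k2) \<longrightarrow>
          f1 \<noteq> f2 \<and> k1 \<noteq> k2 \<and> P f1 k2 = None \<and> P f2 k1 = None))"

text \<open>Position (minus 1) of an n-subset T' of [0,Lambda) in the lexicographic order of
all n-subsets (subsets compared as increasingly sorted lists).\<close>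

definition lex_rank :: "nat \<Rightarrow> nat \<Rightarrow> nat set \<Rightarrow> nat" where
  "lex_rank Lam n T' =
     card {S'. S' \<subseteq> {..<Lam} \<and> card S' = n \<and>
               ord_class.lexordp (sorted_list_of_set S') (sorted_list_of_set T')}"

definition D_entry :: "nat \<Rightarrow> nat \<Rightarrow> nat \<Rightarrow> nat set \<Rightarrow> nat set \<Rightarrow> nat option" where
  "D_entry Lam r a T U =
     (if T \<inter> U \<noteq> {} then None else Some (lex_rank Lam (a + r) (T \<union> U)))"

end

theory Submission imports Defs begin

lemma ct_reducers_eq: "ct_reducers = ct_batches"
  unfolding ct_reducers_def ct_batches_def by (intro ext) simp

lemma finite_ct_batches: "finite (ct_batches Lam n)"
  unfolding ct_batches_def by (rule finite_subset[of _ "Pow {..<Lam}"]) auto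

lemma card_ct_batches: "card (ct_batches Lam n) = Lam choose n"
  unfolding ct_batches_def using n_subsets[of "{..<Lam}" n] by simp

abbreviation sl :: "nat set \<Rightarrow> nat list" where "sl \<equiv> sorted_list_of_set"

lemma lex_rank_alt: "lex_rank Lam n X =
   card {S' \<in> ct_batches Lam n. ord_class.lexordp (sl S') (sl X)}"
  unfolding lex_rank_def ct_batches_def by (simp add: conj_assoc)

lemma lex_rank_less:
  assumes "X \<in> ct_batches Lam n"
  shows "lex_rank Lam n X < card (ct_batches Lam n)"
proof -
  have "{S' \<in> ct_batches Lam n. ord_class.lexordp (sl S') (sl X)} \<subset> ct_batches Lam n"
    using assms lexordp_irreflexive' by blast
  then show ?thesis unfolding lex_rank_alt by (simp add: psubset_card_mono finite_ct_batches)
qed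

lemma lex_rank_mono:
  assumes "X \<in> ct_batches Lam n" "Y \<in> ct_batches Lam n" "ord_class.lexordp (sl X) (sl Y)"
  shows "lex_rank Lam n X < lex_rank Lam n Y"
proof -
  have "{S' \<in> ct_batches Lam n. ord_class.lexordp (sl S') (sl X)}
     \<subset> {S' \<in> ct_batches Lam n. ord_class.lexordp (sl S') (sl Y)}"
    using assms lexordp_irreflexive' lexordp_trans by blast
  then show ?thesis unfolding lex_rank_alt
    by (intro psubset_card_mono) (auto intro: finite_subset[OF _ finite_ct_batches])
qed

lemma fin_b: "X \<in> ct_batches Lam n \<Longrightarrow> finite X"
  unfolding ct_batches_def by (auto intro: finite_subset)

lemma lex_rank_inj: "inj_on (lex_rank Lam n) (ct_batches Lam n)"
proof (rule inj_onI, rule ccontr)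
  fix X Y assume X: "X \<in> ct_batches Lam n" and Y: "Y \<in> ct_batches Lam n"
    and eq: "lex_rank Lam n X = lex_rank Lam n Y" and ne: "X \<noteq> Y"
  have "sl X \<noteq> sl Y" using ne fin_b[OF X] fin_b[OF Y]
    by (metis sorted_list_of_set.set_sorted_key_list_of_set)
  then show False using lexordp_linear[of "sl X" "sl Y"] lex_rank_mono[OF X Y] lex_rank_mono[OF Y X] eq
    by auto
qed

lemma lex_rank_bij: "bij_betw (lex_rank Lam n) (ct_batches Lam n) {..<card (ct_batches Lam n)}"
proof -
  have "lex_rank Lam n ` ct_batches Lam n \<subseteq> {..<card (ct_batches Lam n)}"
    using lex_rank_less by blast
  moreover have "card (lex_rank Lam n ` ct_batches Lam n) = card {..<card (ct_batches Lam n)}"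
    using card_image[OF lex_rank_inj] by simp
  ultimately have "lex_rank Lam n ` ct_batches Lam n = {..<card (ct_batches Lam n)}"
    by (intro card_subset_eq) auto
  then show ?thesis using lex_rank_inj unfolding bij_betw_def by blast
qed


lemma union_in:
  assumes "T \<in> ct_batches Lam r" "U \<in> ct_reducers Lam a" "T \<inter> U = {}"
  shows "T \<union> U \<in> ct_batches Lam (a + r)"
  using assms fin_b[of T] fin_b[of U] unfolding ct_reducers_eq
  by (auto simp: ct_batches_def card_Un_disjoint)

lemma D_some:
  assumes "T \<in> ct_batches Lam r" "U \<in> ct_reducers Lam a" "D_entry Lam r a T U = Some s"
  shows "T \<inter> U = {} \<and> T \<union> U \<in> ct_batches Lam (a + r) \<and> s = lex_rank Lam (a + r) (T \<union> U)"
  using assms union_in[OF assms(1,2)] unfolding D_entry_def by (auto split: if_splits)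

lemma subset_card_eq: "finite B \<Longrightarrow> A \<subseteq> B \<Longrightarrow> card A = card B \<Longrightarrow> A = B"
  by (rule card_subset_eq)

lemma mra_part:
  assumes "1 \<le> a" "1 \<le> r" "a + r \<le> Lam"
  shows "is_regular_MRA (r + a choose r) (Lam choose a) (Lam choose r) (Lam choose (a + r))
             (ct_batches Lam r) (ct_reducers Lam a) (D_entry Lam r a)"
proof -
  let ?R = "ct_batches Lam r" and ?C = "ct_reducers Lam a" and ?D = "D_entry Lam r a"
  let ?rk = "lex_rank Lam (a + r)" and ?B = "ct_batches Lam (a + r)"
  have inj: "X = Y" if "X \<in> ?B" "Y \<in> ?B" "?rk X = ?rk Y" for X Y
    using lex_rank_inj that by (meson inj_onD)
  have g2: "r + a choose r \<ge> 2"
  proof -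
    obtain r' where r': "r = Suc r'" using assms by (cases r) auto
    have "0 < (r' + a) choose r'" "0 < (r' + a) choose Suc r'" using assms by (auto simp: zero_less_binomial)
    moreover have "r + a choose r = (r' + a choose r') + (r' + a choose Suc r')" by (simp add: r')
    ultimately show ?thesis by linarith
  qed
  have cnt: "card {(f, k). f \<in> ?R \<and> k \<in> ?C \<and> ?D f k = Some s} = r + a choose r"
    if s: "s < Lam choose (a + r)" for s
  proof -
    obtain W where W: "W \<in> ?B" "?rk W = s"
    proof -
      have "s \<in> ?rk ` ?B" using lex_rank_bij[of Lam "a+r"] s unfolding card_ct_batches bij_betw_def by simp
      then show ?thesis using that by blast
    qed
    have finW: "finite W" and Wsub: "W \<subseteq> {..<Lam}" and cW: "card W = a + r"
      using fin_b[OF W(1)] W(1) unfolding ct_batches_def by auto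
    have eq: "{(f, k). f \<in> ?R \<and> k \<in> ?C \<and> ?D f k = Some s} = (\<lambda>T. (T, W - T)) ` {T. T \<subseteq> W \<and> card T = r}"
    proof (intro equalityI subsetI)
      fix x assume "x \<in> {(f, k). f \<in> ?R \<and> k \<in> ?C \<and> ?D f k = Some s}"
      then obtain T U where x: "x = (T, U)" "T \<in> ?R" "U \<in> ?C" "?D T U = Some s" by auto
      from D_some[OF x(2-4)] have h: "T \<inter> U = {}" "T \<union> U \<in> ?B" "s = ?rk (T \<union> U)" by auto
      have "T \<union> U = W" using inj[OF h(2) W(1)] h(3) W(2) by simp
      then show "x \<in> (\<lambda>T. (T, W - T)) ` {T. T \<subseteq> W \<and> card T = r}"
        using x h(1) by (auto simp: ct_batches_def)
    next
      fix x assume "x \<in> (\<lambda>T. (T, W - T)) ` {T. T \<subseteq> W \<and> card T = r}"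
      then obtain T where x: "x = (T, W - T)" "T \<subseteq> W" "card T = r" by auto
      have "card (W - T) = a" using x finW cW by (simp add: card_Diff_subset finite_subset)
      then have "T \<in> ?R" "W - T \<in> ?C" using x Wsub by (auto simp: ct_batches_def ct_reducers_def)
      moreover have "T \<union> (W - T) = W" using x by auto
      moreover have "T \<inter> (W - T) = {}" by auto
      ultimately show "x \<in> {(f, k). f \<in> ?R \<and> k \<in> ?C \<and> ?D f k = Some s}"
        using x W(2) by (auto simp: D_entry_def)
    qed
    have "card ((\<lambda>T. (T, W - T)) ` {T. T \<subseteq> W \<and> card T = r}) = card {T. T \<subseteq> W \<and> card T = r}"
      by (rule card_image) (auto simp: inj_on_def)
    also have "\<dots> = (a + r) choose r" using n_subsets[OF finW] cW by simp
    finally show ?thesis using eq by (simp add: add.commute)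
  qed
  have last: "f1 \<noteq> f2 \<and> k1 \<noteq> k2 \<and> ?D f1 k2 = None \<and> ?D f2 k1 = None"
    if f: "f1 \<in> ?R" "f2 \<in> ?R" "k1 \<in> ?C" "k2 \<in> ?C" "?D f1 k1 = Some s" "?D f2 k2 = Some s"
       "(f1, k1) \<noteq> (f2, k2)" for f1 f2 k1 k2 s
  proof -
    note h1 = D_some[OF f(1,3,5)] and h2 = D_some[OF f(2,4,6)]
    have U: "f1 \<union> k1 = f2 \<union> k2" using inj h1 h2 by metis
    have fin: "finite f1" "finite f2" using f fin_b by auto
    have c: "card f1 = card f2" using f by (simp add: ct_batches_def)
    have ne1: "f1 \<noteq> f2"
    proof
      assume e: "f1 = f2"
      have "k1 = (f1 \<union> k1) - f1" "k2 = (f2 \<union> k2) - f2" using h1 h2 by auto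
      then have "k1 = k2" using U e by simp
      then show False using f(7) \<open>f1 = f2\<close> by simp
    qed
    have ne2: "k1 \<noteq> k2"
    proof
      assume e: "k1 = k2"
      have "f1 = (f1 \<union> k1) - k1" "f2 = (f2 \<union> k2) - k2" using h1 h2 by auto
      then have "f1 = f2" using U e by simp
      then show False using ne1 by simp
    qed
    have n1: "f1 \<inter> k2 \<noteq> {}"
    proof
      assume "f1 \<inter> k2 = {}" then have "f1 \<subseteq> f2" using U by blast
      then show False using subset_card_eq[OF fin(2) _ c] ne1 by blast
    qed
    have n2: "f2 \<inter> k1 \<noteq> {}"
    proof
      assume "f2 \<inter> k1 = {}" then have "f2 \<subseteq> f1" using U by blast
      then show False using subset_card_eq[OF fin(1) _ c[symmetric]] ne1 by blast
    qed
    show ?thesis using ne1 ne2 n1 n2 by (simp add: D_entry_def)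
  qed
  have lt: "s < Lam choose (a + r)" if "f \<in> ?R" "k \<in> ?C" "?D f k = Some s" for f k s
    using D_some[OF that] lex_rank_less[of _ Lam "a + r"] card_ct_batches by metis
  show ?thesis unfolding is_regular_MRA_def
  proof (intro conjI)
    show "\<forall>f1\<in>?R. \<forall>f2\<in>?R. \<forall>k1\<in>?C. \<forall>k2\<in>?C. \<forall>s.
          ?D f1 k1 = Some s \<and> ?D f2 k2 = Some s \<and> (f1, k1) \<noteq> (f2, k2) \<longrightarrow>
          f1 \<noteq> f2 \<and> k1 \<noteq> k2 \<and> ?D f1 k2 = None \<and> ?D f2 k1 = None"
      using last by blast
  qed (use finite_ct_batches card_ct_batches g2 cnt lt in \<open>auto simp: ct_reducers_eq\<close>)
qed


definition xr :: "'a set \<Rightarrow> ('a \<Rightarrow> bool) \<Rightarrow> bool" where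
  "xr S f = odd (\<Sum>y\<in>S. (of_bool (f y) :: nat))"

lemma xr_remove: "finite S \<Longrightarrow> y \<in> S \<Longrightarrow> xr S f = (f y \<noteq> xr (S - {y}) f)"
proof -
  assume a: "finite S" "y \<in> S"
  have "(\<Sum>y\<in>S. (of_bool (f y) :: nat)) = of_bool (f y) + (\<Sum>y\<in>S - {y}. (of_bool (f y) :: nat))"
    by (rule sum.remove[OF a])
  then show ?thesis unfolding xr_def by (cases "f y") auto
qed

lemma xr_cong: "(\<And>y. y \<in> S \<Longrightarrow> f y = g y) \<Longrightarrow> xr S f = xr S g"
proof -
  assume "\<And>y. y \<in> S \<Longrightarrow> f y = g y"
  then have "(\<Sum>y\<in>S. (of_bool (f y) :: nat)) = (\<Sum>y\<in>S. (of_bool (g y) :: nat))"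
    by (intro sum.cong) auto
  then show ?thesis unfolding xr_def by simp
qed

definition asub :: "nat \<Rightarrow> nat set \<Rightarrow> nat set set" where
  "asub a W = {U. U \<subseteq> W \<and> card U = a}"

definition idx :: "nat \<Rightarrow> nat set \<Rightarrow> nat set \<Rightarrow> nat set \<Rightarrow> nat" where
  "idx a W U' = (SOME h. bij_betw h (asub a W - {U'}) {0..<card (asub a W - {U'})})"

definition wl :: "nat \<Rightarrow> nat \<Rightarrow> nat \<Rightarrow> nat set \<Rightarrow> nat set list" where
  "wl Lam r a U = (SOME xs. set xs = {W \<in> ct_batches Lam (a + r). U \<subseteq> W} \<and> distinct xs)"

definition bitU :: "nat \<Rightarrow> nat set \<Rightarrow> iv_assign \<Rightarrow> nat set \<Rightarrow> bool" where
  "bitU a U w W = xr (asub a W - {U}) (\<lambda>U''. w ((U'', 0), (W - U'', 0)) (idx a W U'' U))"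

definition encS :: "nat \<Rightarrow> nat \<Rightarrow> nat \<Rightarrow> nat set \<Rightarrow> iv_assign \<Rightarrow> bool list" where
  "encS Lam r a U w = map (bitU a U w) (wl Lam r a U)"

definition pos :: "'a list \<Rightarrow> 'a \<Rightarrow> nat" where
  "pos xs y = (SOME i. i < length xs \<and> xs ! i = y)"

lemma pos_prop: "y \<in> set xs \<Longrightarrow> pos xs y < length xs \<and> xs ! pos xs y = y"
  unfolding pos_def by (rule someI_ex) (simp add: in_set_conv_nth)

definition decS :: "nat \<Rightarrow> nat \<Rightarrow> nat \<Rightarrow> nat set \<Rightarrow> (nat set \<Rightarrow> bool list) \<Rightarrow> iv_assign \<Rightarrow> iv_assign" where
  "decS Lam r a U' M w x b =
     (let T = fst (snd x) in
      if T \<inter> U' \<noteq> {} then w x b else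
      (let W = T \<union> U'; U = (SOME U. U \<in> asub a W - {U'} \<and> idx a W U' U = b) in
        (M U ! pos (wl Lam r a U) W) \<noteq>
          xr (asub a W - {U, U'}) (\<lambda>U''. w ((U'', 0), (W - U'', 0)) (idx a W U'' U))))"

lemma finite_asub: "finite W \<Longrightarrow> finite (asub a W)"
  unfolding asub_def by (rule finite_subset[of _ "Pow W"]) auto

lemma card_asub:
  assumes "finite W" "card W = a + r"
  shows "card (asub a W) = r + a choose r"
proof -
  have "card (asub a W) = (a + r) choose a" using n_subsets[OF assms(1)] assms(2) by (simp add: asub_def)
  also have "\<dots> = (a + r) choose r" using binomial_symmetric[of a "a + r"] by simp
  finally show ?thesis by (simp add: add.commute)
qed

lemma idx_bij:
  assumes "finite W"
  shows "bij_betw (idx a W U') (asub a W - {U'}) {0..<card (asub a W - {U'})}"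
proof -
  have "finite (asub a W - {U'})" using finite_asub[OF assms] by simp
  from ex_bij_betw_finite_nat[OF this] show ?thesis unfolding idx_def by (rule someI_ex)
qed

lemma wl_prop: "set (wl Lam r a U) = {W \<in> ct_batches Lam (a + r). U \<subseteq> W} \<and> distinct (wl Lam r a U)"
proof -
  have "finite {W \<in> ct_batches Lam (a + r). U \<subseteq> W}" using finite_ct_batches by simp
  from finite_distinct_list[OF this] show ?thesis unfolding wl_def by (rule someI_ex)
qed


lemma acc:
  assumes W: "W \<in> ct_batches Lam (a + r)" and U: "U \<in> asub a W"
    and U'': "U'' \<in> asub a W" "U \<noteq> U''"
  shows "iv_accessible Lam r a 1 1 U ((U'', 0), (W - U'', 0))"
    and "idx a W U'' U < (r + a choose r) - 1"
proof -
  have finW: "finite W" and Wsub: "W \<subseteq> {..<Lam}" and cW: "card W = a + r"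
    using fin_b[OF W] W unfolding ct_batches_def by auto
  have s1: "U'' \<subseteq> W" "card U'' = a" "U \<subseteq> W" "card U = a" using U U'' by (auto simp: asub_def)
  have "card (W - U'') = r" using s1 finW cW by (simp add: card_Diff_subset finite_subset)
  then have v: "iv_valid Lam r a 1 1 ((U'', 0), (W - U'', 0))"
    using s1 Wsub by (auto simp: iv_valid_def ct_reducers_def ct_batches_def)
  have "(W - U'') \<inter> U \<noteq> {}"
  proof
    assume "(W - U'') \<inter> U = {}"
    then have "U \<subseteq> U''" using s1 by blast
    then show False using card_subset_eq[of U'' U] s1 finW U''(2) by (metis finite_subset)
  qed
  then show "iv_accessible Lam r a 1 1 U ((U'', 0), (W - U'', 0))"
    using v by (simp add: iv_accessible_def)
  have "idx a W U'' U \<in> {0..<card (asub a W - {U''})}"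
    using idx_bij[OF finW, of a U''] U U''(2) unfolding bij_betw_def by auto
  moreover have "card (asub a W - {U''}) = (r + a choose r) - 1"
    using card_asub[OF finW cW] U'' by (simp add: finite_asub[OF finW])
  ultimately show "idx a W U'' U < (r + a choose r) - 1" by simp
qed

lemma view_eq: "iv_accessible Lam r a p m U x \<Longrightarrow> b < t \<Longrightarrow> iv_view Lam r a p m t U v x b = v x b"
  by (simp add: iv_view_def)

lemma card_sup:
  assumes "U \<in> ct_reducers Lam a" "a \<le> Lam"
  shows "card {W \<in> ct_batches Lam (a + r). U \<subseteq> W} = (Lam - a) choose r"
proof -
  have U: "U \<subseteq> {..<Lam}" "card U = a" "finite U" using assms by (auto simp: ct_reducers_def intro: finite_subset)
  have eq: "{W \<in> ct_batches Lam (a + r). U \<subseteq> W} = (\<lambda>T. T \<union> U) ` {T. T \<subseteq> {..<Lam} - U \<and> card T = r}"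
  proof (intro equalityI subsetI)
    fix W assume "W \<in> {W \<in> ct_batches Lam (a + r). U \<subseteq> W}"
    then have W: "W \<subseteq> {..<Lam}" "card W = a + r" "U \<subseteq> W" by (auto simp: ct_batches_def)
    have "card (W - U) = r" using W U by (simp add: card_Diff_subset finite_subset)
    moreover have "W = (W - U) \<union> U" using W by auto
    ultimately show "W \<in> (\<lambda>T. T \<union> U) ` {T. T \<subseteq> {..<Lam} - U \<and> card T = r}"
      using W by blast
  next
    fix W assume "W \<in> (\<lambda>T. T \<union> U) ` {T. T \<subseteq> {..<Lam} - U \<and> card T = r}"
    then obtain T where T: "W = T \<union> U" "T \<subseteq> {..<Lam} - U" "card T = r" by auto
    have "finite T" using T(2) finite_subset by blast
    moreover have "T \<inter> U = {}" using T(2) by blast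
    ultimately have "card W = a + r" using T U card_Un_disjoint[of T U] by simp
    then show "W \<in> {W \<in> ct_batches Lam (a + r). U \<subseteq> W}" using T U by (auto simp: ct_batches_def)
  qed
  have "inj_on (\<lambda>T. T \<union> U) {T. T \<subseteq> {..<Lam} - U \<and> card T = r}"
    by (rule inj_onI) blast
  then have "card {W \<in> ct_batches Lam (a + r). U \<subseteq> W} = card {T. T \<subseteq> {..<Lam} - U \<and> card T = r}"
    unfolding eq by (rule card_image)
  also have "\<dots> = card ({..<Lam} - U) choose r" by (rule n_subsets) simp
  also have "card ({..<Lam} - U) = Lam - a" using U by (simp add: card_Diff_subset)
  finally show ?thesis .
qed


lemma g2: "1 \<le> a \<Longrightarrow> 1 \<le> r \<Longrightarrow> r + a choose r \<ge> 2"
proof -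
  assume assms: "1 \<le> a" "1 \<le> r"
  obtain r' where r': "r = Suc r'" using assms by (cases r) auto
  have "0 < (r' + a) choose r'" "0 < (r' + a) choose Suc r'" using assms by (auto simp: zero_less_binomial)
  moreover have "r + a choose r = (r' + a choose r') + (r' + a choose Suc r')" by (simp add: r')
  ultimately show ?thesis by linarith
qed

lemma dec_ok:
  assumes a: "1 \<le> a" "1 \<le> r" "a + r \<le> Lam"
    and U': "U' \<in> ct_reducers Lam a"
    and req: "iv_required Lam r a 1 1 U' x" and b: "b < (r + a choose r) - 1"
  shows "decS Lam r a U' (\<lambda>U. if U \<in> ct_reducers Lam a \<and> U \<noteq> U'
             then encS Lam r a U (iv_view Lam r a 1 1 ((r + a choose r) - 1) U v) else [])
          (iv_view Lam r a 1 1 ((r + a choose r) - 1) U' v) x b = v x b"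
proof -
  let ?t = "(r + a choose r) - 1"
  let ?M = "\<lambda>U. if U \<in> ct_reducers Lam a \<and> U \<noteq> U'
             then encS Lam r a U (iv_view Lam r a 1 1 ?t U v) else []"
  obtain T where x: "x = ((U', 0), (T, 0))" and T: "T \<in> ct_batches Lam r"
    using req by (auto simp: iv_required_def iv_valid_def split: prod.splits)
  show ?thesis
  proof (cases "T \<inter> U' \<noteq> {}")
    case True
    then have "iv_accessible Lam r a 1 1 U' x" using req by (simp add: iv_accessible_def iv_required_def x)
    then show ?thesis using True b by (simp add: decS_def x view_eq)
  next
    case False
    then have dis: "T \<inter> U' = {}" by simp
    define W where "W = T \<union> U'"
    have W: "W \<in> ct_batches Lam (a + r)" unfolding W_def by (rule union_in[OF T U' dis])
    have finW: "finite W" using fin_b[OF W] .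
    have cW: "card W = a + r" using W by (simp add: ct_batches_def)
    have U'a: "U' \<in> asub a W" using U' by (auto simp: W_def asub_def ct_reducers_def)
    have TW: "W - U' = T" using dis by (auto simp: W_def)
    have cardt: "card (asub a W - {U'}) = ?t"
      using card_asub[OF finW cW] U'a by (simp add: finite_asub[OF finW])
    have "b \<in> idx a W U' ` (asub a W - {U'})"
      using idx_bij[OF finW, of a U'] b cardt unfolding bij_betw_def by auto
    then have ex: "\<exists>U. U \<in> asub a W - {U'} \<and> idx a W U' U = b" by blast
    define U where "U = (SOME U. U \<in> asub a W - {U'} \<and> idx a W U' U = b)"
    have U: "U \<in> asub a W" "U \<noteq> U'" "idx a W U' U = b"
      using someI_ex[OF ex] unfolding U_def[symmetric] by auto
    have Ured: "U \<in> ct_reducers Lam a" using U(1) W by (auto simp: asub_def ct_reducers_def ct_batches_def)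
    have Win: "W \<in> set (wl Lam r a U)" using wl_prop[of Lam r a U] W U(1) by (auto simp: asub_def)
    note pp = pos_prop[OF Win]
    have msg: "?M U ! pos (wl Lam r a U) W = bitU a U (iv_view Lam r a 1 1 ?t U v) W"
      using Ured U(2) pp by (simp add: encS_def)
    have "bitU a U (iv_view Lam r a 1 1 ?t U v) W
        = xr (asub a W - {U}) (\<lambda>U''. v ((U'', 0), (W - U'', 0)) (idx a W U'' U))"
      unfolding bitU_def
      by (rule xr_cong) (use acc[OF W U(1)] in \<open>auto intro!: view_eq\<close>)
    also have "\<dots> = (v ((U', 0), (W - U', 0)) (idx a W U' U) \<noteq>
        xr (asub a W - {U} - {U'}) (\<lambda>U''. v ((U'', 0), (W - U'', 0)) (idx a W U'' U)))"
      by (rule xr_remove) (use finite_asub[OF finW] U'a U(2) in auto)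
    also have "asub a W - {U} - {U'} = asub a W - {U, U'}" by auto
    also have "xr (asub a W - {U, U'}) (\<lambda>U''. v ((U'', 0), (W - U'', 0)) (idx a W U'' U))
      = xr (asub a W - {U, U'}) (\<lambda>U''. iv_view Lam r a 1 1 ?t U' v ((U'', 0), (W - U'', 0)) (idx a W U'' U))"
      by (rule xr_cong) (use acc[OF W U'a] acc[OF W U(1)] in \<open>auto intro!: view_eq[symmetric]\<close>)
    finally have key: "?M U ! pos (wl Lam r a U) W = (v x b \<noteq>
       xr (asub a W - {U, U'}) (\<lambda>U''. iv_view Lam r a 1 1 ?t U' v ((U'', 0), (W - U'', 0)) (idx a W U'' U)))"
      using msg TW U(3) x by simp
    have "decS Lam r a U' ?M (iv_view Lam r a 1 1 ?t U' v) x b = (?M U ! pos (wl Lam r a U) W \<noteq>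
       xr (asub a W - {U, U'}) (\<lambda>U''. iv_view Lam r a 1 1 ?t U' v ((U'', 0), (W - U'', 0)) (idx a W U'' U)))"
      unfolding decS_def x Let_def fst_conv snd_conv W_def[symmetric] U_def[symmetric] using dis by simp
    then show ?thesis using key x by (cases "v x b") simp_all
  qed
qed


lemma ach_part:
  assumes a: "1 \<le> a" "1 \<le> r" "a + r \<le> Lam"
  shows "madc_ct_achievable Lam r a
           (real (Lam - a choose r) /
            (real (Lam choose r) * (real (r + a choose r) - 1)))"
proof -
  let ?t = "(r + a choose r) - 1"
  have g: "r + a choose r \<ge> 2" using g2 a by simp
  have len: "length (encS Lam r a U w) = length (wl Lam r a U)" for U w
    by (simp add: encS_def)
  have sum: "(\<Sum>U \<in> ct_reducers Lam a. length (wl Lam r a U)) = (Lam choose a) * (Lam - a choose r)"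
  proof -
    have "(\<Sum>U \<in> ct_reducers Lam a. length (wl Lam r a U)) = (\<Sum>U \<in> ct_reducers Lam a. Lam - a choose r)"
    proof (rule sum.cong)
      fix U assume U: "U \<in> ct_reducers Lam a"
      have "length (wl Lam r a U) = card {W \<in> ct_batches Lam (a + r). U \<subseteq> W}"
        using wl_prop[of Lam r a U] distinct_card by metis
      then show "length (wl Lam r a U) = Lam - a choose r" using card_sup[OF U] a by simp
    qed simp
    then show ?thesis using card_ct_batches[of Lam a] by (simp add: ct_reducers_eq)
  qed
  have K: "0 < Lam choose a" using a by (simp add: zero_less_binomial)
  have tr: "real ?t = real (r + a choose r) - 1" using g by (simp add: of_nat_diff)
  have L: "real (Lam - a choose r) / (real (Lam choose r) * (real (r + a choose r) - 1))
     = real (\<Sum>U \<in> ct_reducers Lam a. length (wl Lam r a U)) /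
            (real (card (ct_reducers Lam a) * 1) * real (card (ct_batches Lam r) * 1) * real ?t)"
    unfolding sum tr using K by (simp add: card_ct_batches ct_reducers_eq)
  show ?thesis unfolding madc_ct_achievable_def
    apply (rule exI[of _ 1], rule exI[of _ 1], rule exI[of _ ?t], rule exI[of _ "\<lambda>U. length (wl Lam r a U)"],
           rule exI[of _ "encS Lam r a"], rule exI[of _ "decS Lam r a"])
    using g len dec_ok[OF a] L by auto
qed


theorem theorem4:
  fixes Lam a r :: nat
  assumes "Lam > 0" and "1 \<le> a" and "a \<le> Lam - 1"
    and "1 \<le> r" and "r \<le> Lam - a"
  shows "madc_ct_achievable Lam r a
           (real (Lam - a choose r) /
            (real (Lam choose r) * (real (r + a choose r) - 1)))
         \<and> is_regular_MRA (r + a choose r) (Lam choose a) (Lam choose r) (Lam choose (a + r))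
             (ct_batches Lam r) (ct_reducers Lam a) (D_entry Lam r a)"
proof -
  have "a + r \<le> Lam" using assms by simp
  then show ?thesis using ach_part[of a r Lam] mra_part[of a r Lam] assms by simp
qed

end
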